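(* Let $G=(V,E)$ be a finite simple regular graph with $p=|V|$ vertices and $q=|E|$ edges. If $x$ is any easy construction sequence for $G$, then $\nu(x)=\nu^*(G)=q(p+q)$.
   Context: For a finite simple graph $G=(V,E)$ with $p=|V|$, $q=|E|$, put $\ell=p+q$. A construction sequence (c-sequence) for $G$ is a bijection $x:\{1,\dots,\ell\}\to V\sqcup E$ such that for every edge $e=uw$, $x^{-1}(e)>\max\{x^{-1}(u),x^{-1}(w)\}$. The cost of an edge $e=uw$ in $x$ is $\nu(e,x)=(x^{-1}(e)-x^{-1}(u))+(x^{-1}(e)-x^{-1}(w))$, and the cost of $x$ is $\nu(x)=\sum_{e\in E}\nu(e,x)$. $\nu^*(G)$ denotes the maximum of $\nu(x)$ over all c-sequences $x$ for $G$. A c-sequence is easy if no edge precedes a vertex (all vertices are listed first, then all edges). *)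

theory Defs
  imports Main
begin

definition simple_graph :: "'a set \<Rightarrow> 'a set set \<Rightarrow> bool" where
  "simple_graph V E \<longleftrightarrow> finite V \<and> (\<forall>e\<in>E. e \<subseteq> V \<and> card e = 2)"

definition degree :: "'a set set \<Rightarrow> 'a \<Rightarrow> nat" where
  "degree E v = card {e\<in>E. v \<in> e}"

definition regular_graph :: "'a set \<Rightarrow> 'a set set \<Rightarrow> bool" where
  "regular_graph V E \<longleftrightarrow> simple_graph V E \<and> (\<exists>k. \<forall>v\<in>V. degree E v = k)"

definition elems :: "'a set \<Rightarrow> 'a set set \<Rightarrow> ('a + 'a set) set" where
  "elems V E = Inl ` V \<union> Inr ` E"

definition pos :: "'a set \<Rightarrow> 'a set set \<Rightarrow> (nat \<Rightarrow> 'a + 'a set) \<Rightarrow> ('a + 'a set) \<Rightarrow> nat" where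
  "pos V E x y = the_inv_into {1..card V + card E} x y"

definition c_sequence :: "'a set \<Rightarrow> 'a set set \<Rightarrow> (nat \<Rightarrow> 'a + 'a set) \<Rightarrow> bool" where
  "c_sequence V E x \<longleftrightarrow> bij_betw x {1..card V + card E} (elems V E) \<and>
     (\<forall>e\<in>E. \<forall>u\<in>e. pos V E x (Inr e) > pos V E x (Inl u))"

definition edge_cost :: "'a set \<Rightarrow> 'a set set \<Rightarrow> (nat \<Rightarrow> 'a + 'a set) \<Rightarrow> 'a set \<Rightarrow> int" where
  "edge_cost V E x e = (\<Sum>u\<in>e. int (pos V E x (Inr e)) - int (pos V E x (Inl u)))"

definition cost :: "'a set \<Rightarrow> 'a set set \<Rightarrow> (nat \<Rightarrow> 'a + 'a set) \<Rightarrow> int" where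
  "cost V E x = (\<Sum>e\<in>E. edge_cost V E x e)"

definition max_cost :: "'a set \<Rightarrow> 'a set set \<Rightarrow> int" where
  "max_cost V E = Max {cost V E x | x. c_sequence V E x}"

definition easy :: "'a set \<Rightarrow> 'a set set \<Rightarrow> (nat \<Rightarrow> 'a + 'a set) \<Rightarrow> bool" where
  "easy V E x \<longleftrightarrow> (\<forall>v\<in>V. \<forall>e\<in>E. pos V E x (Inl v) < pos V E x (Inr e))"

end

theory Submission
  imports Defs
begin

lemma dgauss: "2 * (\<Sum>{1..n::nat}) = n * (n + 1)"
  using double_gauss_sum_from_Suc_0[of n, where ?'a = nat] by simp

lemma sum_distinct_ge:
  fixes S :: "nat set"
  shows "finite S \<Longrightarrow> 0 \<notin> S \<Longrightarrow> card S * (card S + 1) \<le> 2 * \<Sum>S"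
proof (induction "card S" arbitrary: S)
  case 0
  then show ?case by simp
next
  case (Suc n)
  then have ne: "S \<noteq> {}" by auto
  define m where "m = Max S"
  have mS: "m \<in> S" using Max_in[OF Suc.prems(1) ne] m_def by simp
  have "S \<subseteq> {1..m}" using Suc.prems m_def Max_ge by (metis atLeastAtMost_iff less_one not_le subsetI)
  then have "card S \<le> m" using card_mono[of "{1..m}" S] by simp
  have cS': "card (S - {m}) = n" using Suc.hyps(2) mS Suc.prems(1) by simp
  have IH: "n * (n + 1) \<le> 2 * \<Sum>(S - {m})"
    using Suc.hyps(1)[of "S - {m}"] cS' Suc.prems by auto
  have "\<Sum>S = m + \<Sum>(S - {m})" using sum.remove[OF Suc.prems(1) mS, of id] by simp
  then show ?case using IH \<open>card S \<le> m\<close> Suc.hyps(2)[symmetric] by simp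
qed

lemma double_count:
  fixes f :: "'a \<Rightarrow> int"
  assumes "finite V" "finite E" "\<forall>e\<in>E. e \<subseteq> V"
  shows "(\<Sum>e\<in>E. \<Sum>u\<in>e. f u) = (\<Sum>v\<in>V. int (degree E v) * f v)"
proof -
  have "(\<Sum>e\<in>E. \<Sum>u\<in>e. f u) = (\<Sum>e\<in>E. \<Sum>v\<in>V. if v \<in> e then f v else 0)"
  proof (rule sum.cong)
    fix e assume "e \<in> E"
    then have "e \<subseteq> V" using assms by auto
    then have "e = {v\<in>V. v \<in> e}" by auto
    then show "(\<Sum>u\<in>e. f u) = (\<Sum>v\<in>V. if v \<in> e then f v else 0)"
      using sum.inter_filter[OF assms(1), of f "\<lambda>v. v \<in> e"] by simp
  qed simp
  also have "\<dots> = (\<Sum>v\<in>V. \<Sum>e\<in>E. if v \<in> e then f v else 0)" by (rule sum.swap)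
  also have "\<dots> = (\<Sum>v\<in>V. int (degree E v) * f v)"
  proof (rule sum.cong)
    fix v assume "v \<in> V"
    have "(\<Sum>e\<in>E. if v \<in> e then f v else 0) = (\<Sum>e\<in>{e\<in>E. v \<in> e}. f v)"
      using sum.inter_filter[OF assms(2), of "\<lambda>_. f v" "\<lambda>e. v \<in> e"] by simp
    then show "(\<Sum>e\<in>E. if v \<in> e then f v else 0) = int (degree E v) * f v"
      by (simp add: degree_def)
  qed simp
  finally show ?thesis .
qed


lemma cseq_main:
  assumes sg: "simple_graph V E" and deg: "\<forall>v\<in>V. degree E v = k"
    and cs: "c_sequence V E y"
  shows "cost V E y = 2 * int (\<Sum>{1..card V + card E}) - int (k + 2) * int (\<Sum>v\<in>V. pos V E y (Inl v))"
    and "card V * (card V + 1) \<le> 2 * (\<Sum>v\<in>V. pos V E y (Inl v))"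
    and "easy V E y \<Longrightarrow> 2 * (\<Sum>v\<in>V. pos V E y (Inl v)) = card V * (card V + 1)"
    and "0 \<le> cost V E y"
proof -
  define l where "l = card V + card E"
  define P where "P = pos V E y"
  have fV: "finite V" using sg by (simp add: simple_graph_def)
  have EV: "\<forall>e\<in>E. e \<subseteq> V" and c2: "\<forall>e\<in>E. card e = 2" using sg by (auto simp: simple_graph_def)
  have fE: "finite E" using EV fV by (meson PowI finite_Pow_iff finite_subset subsetI)
  have bij: "bij_betw y {1..l} (elems V E)" using cs by (simp add: c_sequence_def l_def)
  have bP: "bij_betw P (elems V E) {1..l}"
    unfolding P_def pos_def l_def[symmetric] using bij bij_betw_the_inv_into by blast
  have before: "\<forall>e\<in>E. \<forall>u\<in>e. P (Inl u) < P (Inr e)" using cs by (simp add: c_sequence_def P_def)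
  have dj: "Inl ` V \<inter> Inr ` E = {}" by auto
  have sumall: "(\<Sum>z\<in>elems V E. P z) = \<Sum>{1..l}"
    using sum.reindex_bij_betw[OF bP, of id] by simp
  have "(\<Sum>z\<in>elems V E. P z) = (\<Sum>z\<in>Inl ` V. P z) + (\<Sum>z\<in>Inr ` E. P z)"
    unfolding elems_def using fV fE dj by (simp add: sum.union_disjoint)
  also have "\<dots> = (\<Sum>v\<in>V. P (Inl v)) + (\<Sum>e\<in>E. P (Inr e))"
    by (simp add: sum.reindex)
  finally have split: "(\<Sum>v\<in>V. P (Inl v)) + (\<Sum>e\<in>E. P (Inr e)) = \<Sum>{1..l}" using sumall by simp
  have dc: "(\<Sum>e\<in>E. \<Sum>u\<in>e. int (P (Inl u))) = int k * int (\<Sum>v\<in>V. P (Inl v))"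
    using double_count[OF fV fE EV, of "\<lambda>u. int (P (Inl u))"] deg
    by (simp add: sum_distrib_left)
  have "cost V E y = (\<Sum>e\<in>E. \<Sum>u\<in>e. int (P (Inr e)) - int (P (Inl u)))"
    by (simp add: cost_def edge_cost_def P_def)
  also have "\<dots> = (\<Sum>e\<in>E. 2 * int (P (Inr e))) - (\<Sum>e\<in>E. \<Sum>u\<in>e. int (P (Inl u)))"
    using c2 by (simp add: sum_subtractf sum.distrib[symmetric])
  also have "\<dots> = 2 * int (\<Sum>e\<in>E. P (Inr e)) - int k * int (\<Sum>v\<in>V. P (Inl v))"
    using dc by (simp add: sum_distrib_left)
  finally show "cost V E y = 2 * int (\<Sum>{1..card V + card E}) - int (k + 2) * int (\<Sum>v\<in>V. P (Inl v))"
    unfolding l_def[symmetric] using split[symmetric] by (simp add: algebra_simps)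
  show "0 \<le> cost V E y"
    unfolding cost_def edge_cost_def using before P_def
    by (force intro!: sum_nonneg)
  define SV where "SV = P ` Inl ` V"
  have injP: "inj_on P (elems V E)" using bP bij_betw_def by blast
  have injV: "inj_on P (Inl ` V)" using injP unfolding elems_def by (rule inj_on_subset) auto
  have cSV: "card SV = card V" unfolding SV_def using injV
    by (simp add: card_image inj_on_def)
  have sSV: "\<Sum>SV = (\<Sum>v\<in>V. P (Inl v))" unfolding SV_def using injV
    by (simp add: sum.reindex inj_on_def)
  have SVsub: "SV \<subseteq> {1..l}" unfolding SV_def using bP unfolding elems_def bij_betw_def by auto
  have fSV: "finite SV" using SVsub finite_subset by blast
  have "0 \<notin> SV" using SVsub by auto
  from sum_distinct_ge[OF fSV this] cSV sSV
  show "card V * (card V + 1) \<le> 2 * (\<Sum>v\<in>V. P (Inl v))" by simp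
  assume ez: "easy V E y"
  have "SV \<subseteq> {1..card V}"
  proof
    fix m assume "m \<in> SV"
    then obtain v where v: "v \<in> V" "m = P (Inl v)" unfolding SV_def by auto
    have "{1..m} \<subseteq> SV"
    proof
      fix j assume j: "j \<in> {1..m}"
      have "m \<le> l" using \<open>m \<in> SV\<close> SVsub by auto
      then have "j \<in> {1..l}" using j by auto
      then obtain z where z: "z \<in> elems V E" "P z = j" using bP unfolding bij_betw_def by (metis imageE)
      show "j \<in> SV"
      proof (cases "z \<in> Inl ` V")
        case True then show ?thesis using z SV_def by auto
      next
        case False
        then obtain e where "e \<in> E" "z = Inr e" using z unfolding elems_def by auto
        then have "P (Inl v) < j" using ez v z unfolding easy_def P_def by metis
        then show ?thesis using j v by auto
      qed
    qed
    then have "card {1..m} \<le> card SV" using fSV card_mono by blast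
    then show "m \<in> {1..card V}" using cSV \<open>m \<in> SV\<close> SVsub by auto
  qed
  then have "SV = {1..card V}" using cSV fSV
    by (metis card_atLeastAtMost card_subset_eq diff_Suc_1 finite_atLeastAtMost)
  then show "2 * (\<Sum>v\<in>V. P (Inl v)) = card V * (card V + 1)" using sSV dgauss by metis
qed


lemma aux: "(c::int) = 2 * T - int (k + 2) * S \<Longrightarrow> 2 * c = 2 * (2 * T) - (int k + 2) * (2 * S)"
  by (simp add: algebra_simps)

lemma arith: "(k::int)*p = 2*q \<Longrightarrow> 2*((p+q)*(p+q+1)) - (k+2)*(p*(p+1)) = 2*(q*(p+q))"
proof -
  assume h: "k*p = 2*q"
  have "(k+2)*(p*(p+1)) = (k*p)*(p+1) + 2*p*(p+1)" by (simp add: algebra_simps)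
  also have "\<dots> = 2*q*(p+1) + 2*p*(p+1)" using h by simp
  finally show ?thesis by (simp add: algebra_simps)
qed

theorem theorem1:
  fixes V :: "'a set" and E :: "'a set set" and x :: "nat \<Rightarrow> 'a + 'a set"
  assumes "regular_graph V E"
    and "c_sequence V E x"
    and "easy V E x"
  shows "cost V E x = max_cost V E \<and>
         max_cost V E = int (card E * (card V + card E))"
proof -
  have sg: "simple_graph V E" using assms(1) by (simp add: regular_graph_def)
  obtain k where deg: "\<forall>v\<in>V. degree E v = k" using assms(1) by (auto simp: regular_graph_def)
  have fV: "finite V" using sg by (simp add: simple_graph_def)
  have EV: "\<forall>e\<in>E. e \<subseteq> V" and c2: "\<forall>e\<in>E. card e = 2" using sg by (auto simp: simple_graph_def)
  have fE: "finite E" using EV fV by (meson PowI finite_Pow_iff finite_subset subsetI)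
  define p where "p = card V"
  define q where "q = card E"
  have "(\<Sum>e\<in>E. \<Sum>u\<in>e. (1::int)) = (\<Sum>v\<in>V. int (degree E v) * 1)"
    by (rule double_count[OF fV fE EV])
  then have kp: "int k * int p = 2 * int q" using c2 deg by (simp add: p_def q_def mult.commute)
  have G: "2 * int (\<Sum>{1..p + q}) = (int p + int q) * (int p + int q + 1)"
    using arg_cong[OF dgauss[of "p+q"], of int] by (simp add: distrib_left)
  define C where "C = int q * (int p + int q)"
  have cx: "cost V E x = C"
  proof -
    note h = cseq_main[OF sg deg assms(2), folded p_def q_def]
    have e: "2 * int (\<Sum>v\<in>V. pos V E x (Inl v)) = int p * (int p + 1)"
      using arg_cong[OF h(3)[OF assms(3)], of int] by (simp add: distrib_left)
    have "2 * cost V E x = 2 * ((int p + int q) * (int p + int q + 1)) - (int k + 2) * (int p * (int p + 1))"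
      using aux[OF h(1)] unfolding G e .
    also have "\<dots> = 2 * C" unfolding C_def by (rule arith[OF kp])
    finally show ?thesis by simp
  qed
  have le: "cost V E y \<le> C" if cy: "c_sequence V E y" for y
  proof -
    note h = cseq_main[OF sg deg cy, folded p_def q_def]
    have e: "int p * (int p + 1) \<le> 2 * int (\<Sum>v\<in>V. pos V E y (Inl v))"
      using h(2)[THEN of_nat_mono[where 'a=int]] by (simp add: distrib_left)
    have "2 * cost V E y = 2 * ((int p + int q) * (int p + int q + 1)) - (int k + 2) * (2 * int (\<Sum>v\<in>V. pos V E y (Inl v)))"
      using aux[OF h(1)] unfolding G .
    also have "\<dots> \<le> 2 * ((int p + int q) * (int p + int q + 1)) - (int k + 2) * (int p * (int p + 1))"
      using e by (intro diff_left_mono mult_left_mono) auto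
    also have "\<dots> = 2 * C" unfolding C_def by (rule arith[OF kp])
    finally show ?thesis by simp
  qed
  have sub: "{cost V E x | x. c_sequence V E x} \<subseteq> {0..C}"
    using le cseq_main(4)[OF sg deg] by auto
  have fin: "finite {cost V E x | x. c_sequence V E x}" using sub finite_subset by blast
  have "max_cost V E = C" unfolding max_cost_def
    by (rule Max_eqI[OF fin]) (use le cx assms(2) in auto)
  then show ?thesis using cx unfolding C_def p_def q_def by simp
qed

end
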